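(* For all integers $n\ge1$ the following hold in the $q$-shuffle algebra $\mathbb V$: $$\sum_{k=0}^n G_k\star\tilde G_{n-k}\,q^{n-2k}=q\sum_{k=0}^{n-1}W_{-k}\star W_{n-k}\,q^{n-1-2k},$$ $$\sum_{k=0}^n G_k\star\tilde G_{n-k}\,q^{2k-n}=q\sum_{k=0}^{n-1}W_{n-k}\star W_{-k}\,q^{n-1-2k},$$ $$\sum_{k=0}^n \tilde G_k\star G_{n-k}\,q^{n-2k}=q\sum_{k=0}^{n-1}W_{n-k}\star W_{-k}\,q^{2k+1-n},$$ $$\sum_{k=0}^n \tilde G_k\star G_{n-k}\,q^{2k-n}=q\sum_{k=0}^{n-1}W_{-k}\star W_{n-k}\,q^{2k+1-n}.$$
   Context: Let $\mathbb F$ be a field and let $q\in\mathbb F$ be nonzero and not a root of unity. Let $\mathbb V$ be the free associative $\mathbb F$-algebra on noncommuting $x,y$, with basis the words (including $1$). Juxtaposition denotes concatenation. Set $\langle x,x\rangle=\langle y,y\rangle=2$ and $\langle x,y\rangle=\langle y,x\rangle=-2$. The $q$-shuffle product $\star$ is the bilinear product determined as follows: - $1\star v=v\star 1=v$; - for nontrivial words $u=u_1\cdots u_r$ and $v=v_1\cdots v_s$, $$u\star v=u_1((u_2\cdots u_r)\star v)+v_1(u\star(v_2\cdots v_s))q^{\langle u_1,v_1\rangle+\cdots+\langle u_r,v_1\rangle}.$$ This makes $\mathbb V$ an associative algebra, the $q$-shuffle algebra. For $k\in\mathbb N$: - $W_{-k}=xyx\cdots x$ is the alternating word of length $2k+1$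 beginning and ending with $x$; - $W_{k+1}=yxy\cdots y$ is the alternating word of length $2k+1$ beginning and ending with $y$; - $G_k=yxyx\cdots yx$ is the word of length $2k$; - $\tilde G_k=xyxy\cdots xy$ is the word of length $2k$; - $G_0=\tilde G_0=1$. *)

theory Defs
  imports Main "HOL-Library.Poly_Mapping"
begin

text \<open>Letters x, y; words are lists of letters; the free algebra V is the space of
finitely supported F-valued functions on words (basis = words, 1 = empty word).\<close>

datatype letter = X | Y

type_synonym word = "letter list"
type_synonym 'a V = "word \<Rightarrow>\<^sub>0 'a"

fun bform :: "letter \<Rightarrow> letter \<Rightarrow> int" where
  "bform a b = (if a = b then 2 else -2)"

definition wd :: "word \<Rightarrow> 'a::zero_neq_one V" where
  "wd w = Poly_Mapping.single w 1"

definition vsmult :: "'a::semiring_0 \<Rightarrow> 'a V \<Rightarrow> 'a V" where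
  "vsmult c f = Poly_Mapping.map (\<lambda>t. c * t) f"

definition prepend :: "letter \<Rightarrow> 'a::comm_monoid_add V \<Rightarrow> 'a V" where
  "prepend a f = (\<Sum>w\<in>Poly_Mapping.keys f. Poly_Mapping.single (a # w) (Poly_Mapping.lookup f w))"

fun qshw :: "'a::field \<Rightarrow> word \<Rightarrow> word \<Rightarrow> 'a V" where
  "qshw q [] v = wd v"
| "qshw q (a # u) [] = wd (a # u)"
| "qshw q (a # u) (b # v) =
     prepend a (qshw q u (b # v))
     + vsmult (q powi (\<Sum>c\<leftarrow>a # u. bform c b)) (prepend b (qshw q (a # u) v))"

definition qshuffle :: "'a::field \<Rightarrow> 'a V \<Rightarrow> 'a V \<Rightarrow> 'a V" where
  "qshuffle q f g = (\<Sum>u\<in>Poly_Mapping.keys f. \<Sum>v\<in>Poly_Mapping.keys g. vsmult (Poly_Mapping.lookup f u * Poly_Mapping.lookup g v) (qshw q u v))"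

definition Wneg :: "nat \<Rightarrow> word" where
  "Wneg k = concat (replicate k [X, Y]) @ [X]"
definition Wpos :: "nat \<Rightarrow> word" where  \<comment> \<open>W_{k+1} = yxy...y, length 2k+1\<close>
  "Wpos k = concat (replicate k [Y, X]) @ [Y]"
definition Gw :: "nat \<Rightarrow> word" where
  "Gw k = concat (replicate k [Y, X])"
definition Gtw :: "nat \<Rightarrow> word" where
  "Gtw k = concat (replicate k [X, Y])"

end

theory Submission
  imports Defs
begin

definition wt :: "word \<Rightarrow> letter \<Rightarrow> int" where
  "wt u c = (\<Sum>d\<leftarrow>u. bform d c)"

fun S :: "'a::field \<Rightarrow> word \<Rightarrow> word \<Rightarrow> word \<Rightarrow> 'a" where
  "S q [] v w = (if v = w then 1 else 0)"
| "S q (a # u) [] w = (if a # u = w then 1 else 0)"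
| "S q (a # u) (b # v) [] = 0"
| "S q (a # u) (b # v) (c # w) =
     (if c = a then S q u (b # v) w else 0)
   + (if c = b then q powi wt (a # u) b * S q (a # u) v w else 0)"

lemma lookup_wd: "Poly_Mapping.lookup (wd w :: 'a::zero_neq_one V) w' = (if w = w' then 1 else 0)"
  by (simp add: wd_def lookup_single when_def)

lemma lookup_vsmult: "Poly_Mapping.lookup (vsmult c f) w = c * Poly_Mapping.lookup f w"
  by (simp add: vsmult_def map.rep_eq when_def)

lemma lookup_prepend:
  "Poly_Mapping.lookup (prepend a f) w' =
     (case w' of [] \<Rightarrow> 0 | b # w \<Rightarrow> (if a = b then Poly_Mapping.lookup f w else 0))"
proof -
  have "Poly_Mapping.lookup (prepend a f) w' =
        (\<Sum>w\<in>Poly_Mapping.keys f. (if a # w = w' then Poly_Mapping.lookup f w else 0))"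
    by (simp add: prepend_def lookup_sum lookup_single when_def)
  also have "\<dots> = (case w' of [] \<Rightarrow> 0 | b # w \<Rightarrow> (if a = b then Poly_Mapping.lookup f w else 0))"
  proof (cases w')
    case Nil then show ?thesis by simp
  next
    case (Cons b w)
    show ?thesis
    proof (cases "a = b")
      case True
      have "(\<Sum>v\<in>Poly_Mapping.keys f. (if a # v = w' then Poly_Mapping.lookup f v else 0))
          = (\<Sum>v\<in>Poly_Mapping.keys f. (if v = w then Poly_Mapping.lookup f v else 0))"
        using Cons True by (intro sum.cong) auto
      also have "\<dots> = Poly_Mapping.lookup f w"
        by (simp add: sum.delta in_keys_iff)
      finally show ?thesis using Cons True by simp
    next
      case False then show ?thesis using Cons by simp
    qed
  qed
  finally show ?thesis .
qed

lemma lookup_qshw: "Poly_Mapping.lookup (qshw q u v) w = S q u v w"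
proof (induction q u v arbitrary: w rule: qshw.induct)
  case (1 q v) then show ?case by (simp add: lookup_wd)
next
  case (2 q a u) then show ?case by (simp add: lookup_wd)
next
  case (3 q a u b v)
  then show ?case
    by (cases w) (simp_all add: lookup_add lookup_prepend lookup_vsmult wt_def)
qed

lemma S_Nil_right: "S q u [] w = (if u = w then 1 else 0)"
  by (cases u) auto

lemma S_empty_word: "S q u v [] = (if u = [] \<and> v = [] then 1 else 0)"
  by (cases u; cases v) auto

lemma S_Cons:
  "S q u v (c # w) = (if u \<noteq> [] \<and> hd u = c then S q (tl u) v w else 0)
     + (if v \<noteq> [] \<and> hd v = c then q powi wt u c * S q u (tl v) w else 0)"
proof (cases u)
  case Nil then show ?thesis by (cases v) (auto simp: wt_def)
next
  case (Cons a u')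
  then show ?thesis by (cases v) (auto simp: S_Nil_right)
qed


lemma wt_append: "wt (u @ v) c = wt u c + wt v c"
  by (simp add: wt_def)

lemma wt_Cons: "wt (a # u) c = bform a c + wt u c"
  by (simp add: wt_def)

lemma wt_Nil: "wt [] c = 0"
  by (simp add: wt_def)

lemma wt_rev: "wt (rev u) c = wt u c"
  by (induction u) (simp_all add: wt_def)

lemma list3_cases:
  obtains "u = []" | a where "u = [a]" | a m e where "u = a # m @ [e]"
proof (cases u)
  case Nil then show ?thesis using that by blast
next
  case (Cons a u')
  then show ?thesis using that by (cases u' rule: rev_cases) auto
qed

lemma bform_sym: "bform a b = bform b a"
  by simp

lemma S_snoc:
  assumes q: "q \<noteq> 0"
  shows "S q u v (w @ [c]) =
     (if u \<noteq> [] \<and> last u = c then q powi wt v c * S q (butlast u) v w else 0)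
   + (if v \<noteq> [] \<and> last v = c then S q u (butlast v) w else 0)"
proof (induction w arbitrary: u v)
  case Nil
  show ?case
  proof (cases u)
    case Nil
    then show ?thesis
      by (cases v rule: rev_cases) (auto simp: S_Nil_right wt_def)
  next
    case (Cons a u')
    then show ?thesis
      by (cases v rule: rev_cases) (auto simp: S_Cons S_empty_word S_Nil_right wt_def)
  qed
next
  case (Cons d w)
  have e1: "S q u v ((d # w) @ [c]) = (if u \<noteq> [] \<and> hd u = d then S q (tl u) v (w @ [c]) else 0)
     + (if v \<noteq> [] \<and> hd v = d then q powi wt u d * S q u (tl v) (w @ [c]) else 0)"
    by (simp add: S_Cons)
  have wtb: "wt u d = wt (butlast u) d + bform (last u) d" if "u \<noteq> []" for u
    using that by (metis append_butlast_last_id wt_append wt_Cons wt_Nil add_0_right)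
  have wtt: "wt v c = bform (hd v) c + wt (tl v) c" if "v \<noteq> []" for v
    using that by (metis list.collapse wt_Cons)
  have pw: "q powi (a + b) = q powi a * q powi b" for a b
    using q by (simp add: power_int_add)
  show ?case
    unfolding e1 Cons.IH
    apply (rule list3_cases[of u]; rule list3_cases[of v])
    apply (simp_all add: S_Cons wt_Cons wt_append wt_Nil S_Nil_right S_empty_word pw q bform_sym algebra_simps del: bform.simps)
    done
qed


lemma S_rev:
  assumes q: "q \<noteq> 0"
  shows "S q u v w = S q (rev v) (rev u) (rev w)"
proof (induction w arbitrary: u v)
  case Nil then show ?case by (simp add: S_empty_word)
next
  case (Cons c w)
  have "S q u v (c # w) = (if u \<noteq> [] \<and> hd u = c then S q (tl u) v w else 0)
     + (if v \<noteq> [] \<and> hd v = c then q powi wt u c * S q u (tl v) w else 0)"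
    by (rule S_Cons)
  also have "\<dots> = (if u \<noteq> [] \<and> hd u = c then S q (rev v) (rev (tl u)) (rev w) else 0)
     + (if v \<noteq> [] \<and> hd v = c then q powi wt u c * S q (rev (tl v)) (rev u) (rev w) else 0)"
    using Cons.IH by simp
  also have "\<dots> = S q (rev v) (rev u) (rev w @ [c])"
    by (simp add: S_snoc[OF q] wt_rev last_rev butlast_rev hd_rev)
  finally show ?case by simp
qed

fun swp :: "letter \<Rightarrow> letter" where
  "swp X = Y" | "swp Y = X"

lemma swp_swp[simp]: "swp (swp a) = a"
  by (cases a) auto

lemma swp_eq[simp]: "(swp a = swp b) = (a = b)"
  by (cases a; cases b) auto

lemma bform_swp[simp]: "bform (swp a) (swp b) = bform a b"
  by simp

lemma wt_swp: "wt (map swp u) (swp c) = wt u c"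
  by (induction u) (simp_all add: wt_def del: bform.simps)

lemma S_swp: "S q u v w = S q (map swp u) (map swp v) (map swp w)"
proof (induction w arbitrary: u v)
  case Nil then show ?case by (simp add: S_empty_word)
next
  case (Cons c w)
  have "S q u v (c # w) = (if u \<noteq> [] \<and> hd u = c then S q (tl u) v w else 0)
     + (if v \<noteq> [] \<and> hd v = c then q powi wt u c * S q u (tl v) w else 0)"
    by (rule S_Cons)
  also have "\<dots> = (if u \<noteq> [] \<and> hd u = c then S q (map swp (tl u)) (map swp v) (map swp w) else 0)
     + (if v \<noteq> [] \<and> hd v = c then q powi wt u c * S q (map swp u) (map swp (tl v)) (map swp w) else 0)"
    using Cons.IH by simp
  also have "\<dots> = S q (map swp u) (map swp v) (map swp (c # w))"
    unfolding list.map(2) S_Cons[of q "map swp u"]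
    by (cases "u = []"; cases "v = []") (simp_all add: hd_map map_tl wt_swp wt_Nil)
  finally show ?case .
qed


lemma aux_XY: "X # concat (replicate k [Y, X]) = concat (replicate k [X, Y]) @ [X]"
  by (induction k) auto

lemma aux_YX: "Y # concat (replicate k [X, Y]) = concat (replicate k [Y, X]) @ [Y]"
  by (induction k) auto

lemma concat_rep_comm: "concat (replicate k l) @ l = l @ concat (replicate k l)"
  by (induction k) auto

lemma Gw_0[simp]: "Gw 0 = []" and Gtw_0[simp]: "Gtw 0 = []"
  by (simp_all add: Gw_def Gtw_def)

lemma Gw_Suc: "Gw (Suc k) = Y # Wneg k"
  by (simp add: Gw_def Wneg_def aux_XY)

lemma Gtw_Suc: "Gtw (Suc k) = X # Wpos k"
  by (simp add: Gtw_def Wpos_def aux_YX)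

lemma Wneg_Cons: "Wneg k = X # Gw k"
  by (simp add: Gw_def Wneg_def aux_XY)

lemma Wpos_Cons: "Wpos k = Y # Gtw k"
  by (simp add: Gtw_def Wpos_def aux_YX)

lemma Gw_eq_Nil: "(Gw k = []) = (k = 0)"
  by (cases k) (simp_all add: Gw_Suc)

lemma Gtw_eq_Nil: "(Gtw k = []) = (k = 0)"
  by (cases k) (simp_all add: Gtw_Suc)

lemma wt_Gw: "wt (Gw k) c = 0"
  by (cases c; induction k) (simp_all add: Gw_def wt_def)

lemma wt_Gtw: "wt (Gtw k) c = 0"
  by (cases c; induction k) (simp_all add: Gtw_def wt_def)

lemma wt_Wneg: "wt (Wneg k) c = bform X c"
  by (simp add: Wneg_Cons wt_Cons wt_Gw)

lemma wt_Wpos: "wt (Wpos k) c = bform Y c"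
  by (simp add: Wpos_Cons wt_Cons wt_Gtw)

lemma rev_Gw: "rev (Gw k) = Gtw k"
proof (induction k)
  case 0 then show ?case by simp
next
  case (Suc k)
  have "rev (Gw (Suc k)) = rev (Gw k) @ [X, Y]" by (simp add: Gw_def)
  also have "\<dots> = Gtw (Suc k)" using Suc by (simp add: Gtw_def concat_rep_comm)
  finally show ?case .
qed

lemma rev_Gtw: "rev (Gtw k) = Gw k"
  by (metis rev_Gw rev_rev_ident)

lemma rev_Wneg: "rev (Wneg k) = Wneg k"
proof -
  have "Wneg k = Gtw k @ [X]" by (simp add: Wneg_def Gtw_def)
  then have "rev (Wneg k) = X # rev (Gtw k)" by simp
  then show ?thesis by (simp only: rev_Gtw Wneg_Cons[symmetric])
qed

lemma rev_Wpos: "rev (Wpos k) = Wpos k"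
proof -
  have "Wpos k = Gw k @ [Y]" by (simp add: Wpos_def Gw_def)
  then have "rev (Wpos k) = Y # rev (Gw k)" by simp
  then show ?thesis by (simp only: rev_Gw Wpos_Cons[symmetric])
qed

lemma swp_Gw: "map swp (Gw k) = Gtw k"
  by (induction k) (simp_all add: Gw_def Gtw_def)

lemma swp_Wneg: "map swp (Wneg k) = Wpos k"
  by (simp add: Wneg_Cons Wpos_Cons swp_Gw)

lemma swp_Wpos: "map swp (Wpos k) = Wneg k"
proof -
  have "map swp (Wpos k) = map swp (map swp (Wneg k))" by (simp only: swp_Wneg)
  also have "\<dots> = Wneg k" by (simp add: comp_def)
  finally show ?thesis .
qed

lemma S_GG_X: "S q (Gw k) (Gtw j) (X # w) = (if j = 0 then 0 else S q (Gw k) (Wpos (j - 1)) w)"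
  unfolding S_Cons wt_Gw by (cases k; cases j) (simp_all add: Gw_Suc Gtw_Suc)

lemma S_GG_Y: "S q (Gw k) (Gtw j) (Y # w) = (if k = 0 then 0 else S q (Wneg (k - 1)) (Gtw j) w)"
  unfolding S_Cons wt_Gw by (cases k; cases j) (simp_all add: Gw_Suc Gtw_Suc)

lemma S_WW_X: "S q (Wneg k) (Wpos j) (X # w) = S q (Gw k) (Wpos j) w"
  by (simp add: S_Cons Wneg_Cons Wpos_Cons)

lemma S_WW_Y: "S q (Wneg k) (Wpos j) (Y # w) = q powi (-2) * S q (Wneg k) (Gtw j) w"
proof -
  have "S q (Wneg k) (Wpos j) (Y # w) = S q (X # Gw k) (Y # Gtw j) (Y # w)"
    by (simp only: Wneg_Cons Wpos_Cons)
  also have "\<dots> = q powi (-2) * S q (X # Gw k) (Gtw j) w"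
    by (simp add: S_Cons wt_Cons wt_Gw)
  finally show ?thesis by (simp only: Wneg_Cons[symmetric])
qed


lemma powi_mul1:
  fixes q :: "'a::field"
  assumes q: "q \<noteq> 0"
  shows "q * (q powi a * s) = q powi (a + 1) * s"
  using q by (simp add: power_int_add)

lemma powi_mul2:
  fixes q :: "'a::field"
  assumes q: "q \<noteq> 0"
  shows "q * (q powi a * (q powi b * s)) = q powi (a + b + 1) * s"
  using q by (simp add: power_int_add)

lemma I1:
  fixes q :: "'a::field"
  assumes q: "q \<noteq> 0" and n: "n \<ge> 1"
  shows "(\<Sum>k=0..n. q powi (int n - 2 * int k) * S q (Gw k) (Gtw (n - k)) w)
       = q * (\<Sum>k=0..n-1. q powi (int n - 1 - 2 * int k) * S q (Wneg k) (Wpos (n - k - 1)) w)"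
proof -
  obtain m where m: "n = Suc m" using n by (cases n) auto
  show ?thesis
  proof (cases w)
    case Nil
    have "\<forall>k\<in>{0..n}. q powi (int n - 2 * int k) * S q (Gw k) (Gtw (n - k)) w = 0"
      using Nil m by (auto simp: S_empty_word Gw_eq_Nil Gtw_eq_Nil)
    moreover have "\<forall>k\<in>{0..n-1}. q powi (int n - 1 - 2 * int k) * S q (Wneg k) (Wpos (n - k - 1)) w = 0"
      using Nil by (auto simp: S_empty_word Wneg_Cons)
    ultimately show ?thesis by (simp only: sum.neutral mult_zero_right)
  next
    case (Cons c w')
    show ?thesis
    proof (cases c)
      case X
      have "(\<Sum>k=0..n. q powi (int n - 2 * int k) * S q (Gw k) (Gtw (n - k)) w)
          = (\<Sum>k=0..Suc m. q powi (int n - 2 * int k) * (if Suc m - k = 0 then 0 else S q (Gw k) (Wpos (Suc m - k - 1)) w'))"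
        using Cons X m by (simp add: S_GG_X)
      also have "\<dots> = (\<Sum>k=0..m. q powi (int n - 2 * int k) * S q (Gw k) (Wpos (m - k)) w')"
        by (simp add: sum.atLeast0_atMost_Suc)
      also have "\<dots> = (\<Sum>k=0..m. q * (q powi (int n - 1 - 2 * int k) * S q (Gw k) (Wpos (m - k)) w'))"
        by (intro sum.cong refl) (simp add: powi_mul1[OF q])
      also have "\<dots> = q * (\<Sum>k=0..n-1. q powi (int n - 1 - 2 * int k) * S q (Wneg k) (Wpos (n - k - 1)) w)"
        using Cons X m by (simp add: S_WW_X sum_distrib_left)
      finally show ?thesis .
    next
      case Y
      have "(\<Sum>k=0..n. q powi (int n - 2 * int k) * S q (Gw k) (Gtw (n - k)) w)
          = (\<Sum>k=0..Suc m. q powi (int n - 2 * int k) * (if k = 0 then 0 else S q (Wneg (k - 1)) (Gtw (Suc m - k)) w'))"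
        using Cons Y m by (simp add: S_GG_Y)
      also have "\<dots> = (\<Sum>k=0..m. q powi (int n - 2 * int (Suc k)) * S q (Wneg k) (Gtw (m - k)) w')"
        by (simp only: sum.atLeast0_atMost_Suc_shift) simp
      also have "\<dots> = (\<Sum>k=0..m. q * (q powi (int n - 1 - 2 * int k) * (q powi (-2) * S q (Wneg k) (Gtw (m - k)) w')))"
        by (intro sum.cong refl) (simp only: powi_mul2[OF q], simp add: algebra_simps)
      also have "\<dots> = q * (\<Sum>k=0..n-1. q powi (int n - 1 - 2 * int k) * S q (Wneg k) (Wpos (n - k - 1)) w)"
        using Cons Y m by (simp add: S_WW_Y sum_distrib_left)
      finally show ?thesis .
    qed
  qed
qed


lemma swp_Gtw: "map swp (Gtw k) = Gw k"
proof -
  have "map swp (Gtw k) = map swp (map swp (Gw k))" by (simp only: swp_Gw)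
  also have "\<dots> = Gw k" by (simp add: comp_def)
  finally show ?thesis .
qed

lemma sum_flip: "(\<Sum>k=0..n. f k) = (\<Sum>k=0..(n::nat). f (n - k))"
  using sum.atLeastAtMost_rev[of f 0 n] by simp

lemma I3:
  fixes q :: "'a::field"
  assumes q: "q \<noteq> 0" and n: "n \<ge> 1"
  shows "(\<Sum>k=0..n. q powi (int n - 2 * int k) * S q (Gtw k) (Gw (n - k)) w)
       = q * (\<Sum>k=0..n-1. q powi (2 * int k + 1 - int n) * S q (Wpos (n - k - 1)) (Wneg k) w)"
proof -
  have L: "S q (Gtw k) (Gw j) w = S q (Gw k) (Gtw j) (map swp w)" for k j
    by (subst S_swp) (simp add: swp_Gw swp_Gtw)
  have R: "S q (Wneg a) (Wpos b) (map swp w) = S q (Wpos a) (Wneg b) w" for a b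
    by (subst S_swp) (simp add: swp_Wneg swp_Wpos comp_def)
  have "(\<Sum>k=0..n. q powi (int n - 2 * int k) * S q (Gtw k) (Gw (n - k)) w)
      = (\<Sum>k=0..n. q powi (int n - 2 * int k) * S q (Gw k) (Gtw (n - k)) (map swp w))"
    by (simp add: L)
  also have "\<dots> = q * (\<Sum>k=0..n-1. q powi (int n - 1 - 2 * int k) * S q (Wpos k) (Wneg (n - k - 1)) w)"
    by (simp add: I1[OF q n] R)
  also have "(\<Sum>k=0..n-1. q powi (int n - 1 - 2 * int k) * S q (Wpos k) (Wneg (n - k - 1)) w)
      = (\<Sum>k=0..n-1. q powi (int n - 1 - 2 * int (n - 1 - k)) * S q (Wpos (n - 1 - k)) (Wneg (n - (n - 1 - k) - 1)) w)"
    by (rule sum_flip)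
  also have "\<dots> = (\<Sum>k=0..n-1. q powi (2 * int k + 1 - int n) * S q (Wpos (n - k - 1)) (Wneg k) w)"
    using n by (intro sum.cong refl) (auto simp: of_nat_diff algebra_simps)
  finally show ?thesis .
qed

lemma I2:
  fixes q :: "'a::field"
  assumes q: "q \<noteq> 0" and n: "n \<ge> 1"
  shows "(\<Sum>k=0..n. q powi (2 * int k - int n) * S q (Gw k) (Gtw (n - k)) w)
       = q * (\<Sum>k=0..n-1. q powi (int n - 1 - 2 * int k) * S q (Wpos (n - k - 1)) (Wneg k) w)"
proof -
  have L: "S q (Gw k) (Gtw j) w = S q (Gw j) (Gtw k) (rev w)" for k j
    by (subst S_rev[OF q]) (simp add: rev_Gw rev_Gtw)
  have R: "S q (Wneg a) (Wpos b) (rev w) = S q (Wpos b) (Wneg a) w" for a b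
    by (subst S_rev[OF q]) (simp add: rev_Wneg rev_Wpos)
  have "(\<Sum>k=0..n. q powi (2 * int k - int n) * S q (Gw k) (Gtw (n - k)) w)
      = (\<Sum>k=0..n. q powi (2 * int k - int n) * S q (Gw (n - k)) (Gtw k) (rev w))"
    by (simp add: L)
  also have "\<dots> = (\<Sum>k=0..n. q powi (2 * int (n - k) - int n) * S q (Gw (n - (n - k))) (Gtw (n - k)) (rev w))"
    by (rule sum_flip)
  also have "\<dots> = (\<Sum>k=0..n. q powi (int n - 2 * int k) * S q (Gw k) (Gtw (n - k)) (rev w))"
    by (intro sum.cong refl) (auto simp: of_nat_diff)
  also have "\<dots> = q * (\<Sum>k=0..n-1. q powi (int n - 1 - 2 * int k) * S q (Wpos (n - k - 1)) (Wneg k) w)"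
    by (simp add: I1[OF q n] R)
  finally show ?thesis .
qed

lemma I4:
  fixes q :: "'a::field"
  assumes q: "q \<noteq> 0" and n: "n \<ge> 1"
  shows "(\<Sum>k=0..n. q powi (2 * int k - int n) * S q (Gtw k) (Gw (n - k)) w)
       = q * (\<Sum>k=0..n-1. q powi (2 * int k + 1 - int n) * S q (Wneg k) (Wpos (n - k - 1)) w)"
proof -
  have L: "S q (Gtw k) (Gw j) w = S q (Gtw j) (Gw k) (rev w)" for k j
    by (subst S_rev[OF q]) (simp add: rev_Gw rev_Gtw)
  have R: "S q (Wpos b) (Wneg a) (rev w) = S q (Wneg a) (Wpos b) w" for a b
    by (subst S_rev[OF q]) (simp add: rev_Wneg rev_Wpos)
  have "(\<Sum>k=0..n. q powi (2 * int k - int n) * S q (Gtw k) (Gw (n - k)) w)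
      = (\<Sum>k=0..n. q powi (2 * int k - int n) * S q (Gtw (n - k)) (Gw k) (rev w))"
    by (simp add: L)
  also have "\<dots> = (\<Sum>k=0..n. q powi (2 * int (n - k) - int n) * S q (Gtw (n - (n - k))) (Gw (n - k)) (rev w))"
    by (rule sum_flip)
  also have "\<dots> = (\<Sum>k=0..n. q powi (int n - 2 * int k) * S q (Gtw k) (Gw (n - k)) (rev w))"
    by (intro sum.cong refl) (auto simp: of_nat_diff)
  also have "\<dots> = q * (\<Sum>k=0..n-1. q powi (2 * int k + 1 - int n) * S q (Wneg k) (Wpos (n - k - 1)) w)"
    by (simp add: I3[OF q n] R)
  finally show ?thesis .
qed


lemma vsmult_one: "vsmult 1 (f :: 'a::field V) = f"
  by (rule poly_mapping_eqI) (simp add: lookup_vsmult)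

lemma qshuffle_wd: "qshuffle q (wd u) (wd v) = qshw q u v"
  by (simp add: qshuffle_def wd_def lookup_single vsmult_one)

lemma lookup_lhs: "Poly_Mapping.lookup (\<Sum>k\<in>A. vsmult (c k) (qshuffle q (wd (u k)) (wd (v k)))) w
   = (\<Sum>k\<in>A. c k * S q (u k) (v k) w)"
  by (simp add: lookup_sum lookup_vsmult qshuffle_wd lookup_qshw)

lemma lookup_rhs: "Poly_Mapping.lookup (vsmult q (\<Sum>k\<in>A. vsmult (c k) (qshuffle q (wd (u k)) (wd (v k))))) w
   = q * (\<Sum>k\<in>A. c k * S q (u k) (v k) w)"
  by (simp only: lookup_vsmult lookup_lhs)

theorem proposition8p1:
  fixes q :: "'a::field" and n :: nat
  assumes "q \<noteq> 0" and "\<And>m::nat. m > 0 \<Longrightarrow> q ^ m \<noteq> 1" and "n \<ge> 1"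
  shows
   "((\<Sum>k=0..n. vsmult (q powi (int n - 2 * int k)) (qshuffle q (wd (Gw k)) (wd (Gtw (n - k)))))
      = vsmult q (\<Sum>k=0..n-1. vsmult (q powi (int n - 1 - 2 * int k))
                              (qshuffle q (wd (Wneg k)) (wd (Wpos (n - k - 1))))))
    \<and> ((\<Sum>k=0..n. vsmult (q powi (2 * int k - int n)) (qshuffle q (wd (Gw k)) (wd (Gtw (n - k)))))
      = vsmult q (\<Sum>k=0..n-1. vsmult (q powi (int n - 1 - 2 * int k))
                              (qshuffle q (wd (Wpos (n - k - 1))) (wd (Wneg k)))))
    \<and> ((\<Sum>k=0..n. vsmult (q powi (int n - 2 * int k)) (qshuffle q (wd (Gtw k)) (wd (Gw (n - k)))))
      = vsmult q (\<Sum>k=0..n-1. vsmult (q powi (2 * int k + 1 - int n))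
                              (qshuffle q (wd (Wpos (n - k - 1))) (wd (Wneg k)))))
    \<and> ((\<Sum>k=0..n. vsmult (q powi (2 * int k - int n)) (qshuffle q (wd (Gtw k)) (wd (Gw (n - k)))))
      = vsmult q (\<Sum>k=0..n-1. vsmult (q powi (2 * int k + 1 - int n))
                              (qshuffle q (wd (Wneg k)) (wd (Wpos (n - k - 1))))))"
proof -
  note q = assms(1) and n = assms(3)
  show ?thesis
    apply (intro conjI; rule poly_mapping_eqI; simp only: lookup_lhs lookup_rhs)
       apply (rule I1[OF q n])
      apply (rule I2[OF q n])
     apply (rule I3[OF q n])
    apply (rule I4[OF q n])
    done
qed

end
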